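(* Let $\mathcal{A}$ be a finite set of non-commuting variables with at least two elements, let $a\in\mathcal{A}$, and let $P\in\mathbb{Q}\langle\mathcal{A}\rangle$ be such that for every $k\ge 0$ the coefficient of the word $a^k$ in $P$ is zero. If $\mathrm{ad}_a(P)=[a,P]=aP-Pa$ is a Lie polynomial, i.e. $[a,P]\in\mathcal{L}_\mathbb{Q}(\mathcal{A})$, then $P$ is a Lie polynomial, i.e. $P\in\mathcal{L}_\mathbb{Q}(\mathcal{A})$.
   Context: $\mathbb{Q}\langle\mathcal{A}\rangle$ is the ring of polynomials with rational coefficients in the non-commuting variables $\mathcal{A}$ (finite linear combinations of words in $\mathcal{A}$, including the empty word), with commutator $[X,Y]=XY-YX$. $\mathcal{L}_\mathbb{Q}(\mathcal{A})$ is the smallest $\mathbb{Q}$-subspace of $\mathbb{Q}\langle\mathcal{A}\rangle$ containing $\mathcal{A}$ and closed under commutators; its elements are called Lie polynomials. *)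

theory Defs
  imports Main "HOL.Rat"
begin

text \<open>Non-commutative polynomials over \<rat> in the variables of a type 'a are represented
  as coefficient functions on words ('a list), with finite support.\<close>

type_synonym 'a ncpoly = "'a list \<Rightarrow> rat"

definition ncpoly :: "'a ncpoly \<Rightarrow> bool" where
  "ncpoly P \<longleftrightarrow> finite {w. P w \<noteq> 0}"

definition ncvar :: "'a \<Rightarrow> 'a ncpoly" where
  "ncvar x = (\<lambda>w. if w = [x] then 1 else 0)"

definition ncadd :: "'a ncpoly \<Rightarrow> 'a ncpoly \<Rightarrow> 'a ncpoly" where
  "ncadd P Q = (\<lambda>w. P w + Q w)"

definition ncsmult :: "rat \<Rightarrow> 'a ncpoly \<Rightarrow> 'a ncpoly" where
  "ncsmult c P = (\<lambda>w. c * P w)"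

definition ncmult :: "'a ncpoly \<Rightarrow> 'a ncpoly \<Rightarrow> 'a ncpoly" where
  "ncmult P Q = (\<lambda>w. \<Sum>i\<le>length w. P (take i w) * Q (drop i w))"

definition nccomm :: "'a ncpoly \<Rightarrow> 'a ncpoly \<Rightarrow> 'a ncpoly" where
  "nccomm X Y = (\<lambda>w. ncmult X Y w - ncmult Y X w)"

inductive_set lie_polys :: "'a ncpoly set" where
  zero: "(\<lambda>w. 0) \<in> lie_polys"
| var: "ncvar x \<in> lie_polys"
| add: "P \<in> lie_polys \<Longrightarrow> Q \<in> lie_polys \<Longrightarrow> ncadd P Q \<in> lie_polys"
| smult: "P \<in> lie_polys \<Longrightarrow> ncsmult c P \<in> lie_polys"
| comm: "P \<in> lie_polys \<Longrightarrow> Q \<in> lie_polys \<Longrightarrow> nccomm P Q \<in> lie_polys"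

end

theory Submission imports Defs "HOL-Library.Multiset" begin

typedef 'a ser = "UNIV :: ('a list \<Rightarrow> rat) set" morphisms cf Abs_ser by auto

lemma cf_Abs [simp]: "cf (Abs_ser f) = f"
  by (simp add: Abs_ser_inverse)

lemma ser_eqI: "(\<And>w. cf X w = cf Y w) \<Longrightarrow> X = Y"
  by (metis cf_inverse ext)

definition splits :: "'a list \<Rightarrow> ('a list \<times> 'a list) set" where
  "splits w = {(u,v). u @ v = w}"

lemma splits_img: "splits w = (\<lambda>i. (take i w, drop i w)) ` {..length w}"
proof -
  have "(u,v) \<in> (\<lambda>i. (take i w, drop i w)) ` {..length w}" if "u @ v = w" for u v
    using that by (intro image_eqI[of _ _ "length u"]) auto
  then show ?thesis unfolding splits_def by auto
qed

lemma finite_splits [simp]: "finite (splits w)"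
  by (simp add: splits_img)

lemma ncmult_splits: "ncmult P Q w = (\<Sum>(u,v)\<in>splits w. P u * Q v)"
proof -
  have inj: "inj_on (\<lambda>i. (take i w, drop i w)) {..length w}"
    by (auto simp: inj_on_def) (metis length_take min.absorb2)
  show ?thesis unfolding ncmult_def splits_img
    by (simp add: sum.reindex[OF inj])
qed

lemma triple_sum_l:
  fixes f :: "'a list \<Rightarrow> 'a list \<Rightarrow> rat" and g :: "'a list \<Rightarrow> rat"
  shows "(\<Sum>(x,z)\<in>splits w. (\<Sum>(u,v)\<in>splits x. f u v) * g z)
   = (\<Sum>(u,v,z)\<in>{(u,v,z). u @ v @ z = w}. f u v * g z)"
proof -
  have "(\<Sum>(x,z)\<in>splits w. (\<Sum>(u,v)\<in>splits x. f u v) * g z)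
      = (\<Sum>(x,z)\<in>splits w. (\<Sum>(u,v)\<in>splits x. f u v * g z))"
    by (auto intro!: sum.cong simp: sum_distrib_right case_prod_unfold)
  also have "\<dots> = (\<Sum>p\<in>Sigma (splits w) (\<lambda>p. splits (fst p)). f (fst (snd p)) (snd (snd p)) * g (snd (fst p)))"
    by (simp add: sum.Sigma split_def)
  also have "\<dots> = (\<Sum>(u,v,z)\<in>{(u,v,z). u @ v @ z = w}. f u v * g z)"
    by (rule sum.reindex_bij_witness[where i="\<lambda>(u,v,z). ((u@v,z),(u,v))" and j="\<lambda>((x,z),(u,v)). (u,v,z)"])
       (auto simp: splits_def)
  finally show ?thesis .
qed

lemma triple_sum_r:
  fixes g :: "'a list \<Rightarrow> 'a list \<Rightarrow> rat" and f :: "'a list \<Rightarrow> rat"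
  shows "(\<Sum>(u,y)\<in>splits w. f u * (\<Sum>(v,z)\<in>splits y. g v z))
   = (\<Sum>(u,v,z)\<in>{(u,v,z). u @ v @ z = w}. f u * g v z)"
proof -
  have "(\<Sum>(u,y)\<in>splits w. f u * (\<Sum>(v,z)\<in>splits y. g v z))
      = (\<Sum>(u,y)\<in>splits w. (\<Sum>(v,z)\<in>splits y. f u * g v z))"
    by (auto intro!: sum.cong simp: sum_distrib_left case_prod_unfold)
  also have "\<dots> = (\<Sum>p\<in>Sigma (splits w) (\<lambda>p. splits (snd p)). f (fst (fst p)) * g (fst (snd p)) (snd (snd p)))"
    by (simp add: sum.Sigma split_def)
  also have "\<dots> = (\<Sum>(u,v,z)\<in>{(u,v,z). u @ v @ z = w}. f u * g v z)"
    by (rule sum.reindex_bij_witness[where i="\<lambda>(u,v,z). ((u,v@z),(v,z))" and j="\<lambda>((u,y),(v,z)). (u,v,z)"])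
       (auto simp: splits_def)
  finally show ?thesis .
qed

instantiation ser :: (type) ring_1
begin
definition "0 = Abs_ser (\<lambda>w. 0)"
definition "1 = Abs_ser (\<lambda>w. if w = [] then 1 else 0)"
definition "X + Y = Abs_ser (\<lambda>w. cf X w + cf Y w)"
definition "- X = Abs_ser (\<lambda>w. - cf X w)"
definition "X - Y = Abs_ser (\<lambda>w. cf X w - cf Y w)"
definition "X * Y = Abs_ser (\<lambda>w. \<Sum>(u,v)\<in>splits w. cf X u * cf Y v)"

lemma cf_zero [simp]: "cf 0 w = 0" by (simp add: zero_ser_def)
lemma cf_one: "cf 1 w = (if w = [] then 1 else 0)" by (simp add: one_ser_def)
lemma cf_plus [simp]: "cf (X + Y) w = cf X w + cf Y w" by (simp add: plus_ser_def)
lemma cf_uminus [simp]: "cf (- X) w = - cf X w" by (simp add: uminus_ser_def)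
lemma cf_minus [simp]: "cf (X - Y) w = cf X w - cf Y w" by (simp add: minus_ser_def)
lemma cf_times: "cf (X * Y) w = (\<Sum>(u,v)\<in>splits w. cf X u * cf Y v)" by (simp add: times_ser_def)

instance
proof
  fix a b c :: "'a ser"
  show "a * b * c = a * (b * c)"
    by (rule ser_eqI) (simp add: cf_times triple_sum_l triple_sum_r mult.assoc)
  show "1 * a = a"
  proof (rule ser_eqI)
    fix w
    have "cf (1 * a) w = (\<Sum>p\<in>splits w. if p = ([], w) then cf a w else 0)"
      unfolding cf_times by (rule sum.cong) (auto simp: cf_one splits_def split: if_splits)
    then show "cf (1 * a) w = cf a w" by (simp add: sum.delta, simp add: splits_def)
  qed
  show "a * 1 = a"
  proof (rule ser_eqI)
    fix w
    have "cf (a * 1) w = (\<Sum>p\<in>splits w. if p = (w, []) then cf a w else 0)"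
      unfolding cf_times by (rule sum.cong) (auto simp: cf_one splits_def split: if_splits)
    then show "cf (a * 1) w = cf a w" by (simp add: sum.delta, simp add: splits_def)
  qed
  show "(a + b) * c = a * c + b * c"
    by (rule ser_eqI) (simp add: cf_times distrib_right sum.distrib case_prod_unfold)
  show "a * (b + c) = a * b + a * c"
    by (rule ser_eqI) (simp add: cf_times distrib_left sum.distrib case_prod_unfold)
  show "(0::'a ser) \<noteq> 1"
    by (metis cf_one cf_zero zero_neq_one)
qed (auto intro!: ser_eqI)
end


definition sm :: "rat \<Rightarrow> 'a ser \<Rightarrow> 'a ser" where
  "sm c X = Abs_ser (\<lambda>w. c * cf X w)"
definition mon :: "'a list \<Rightarrow> 'a ser" where
  "mon v = Abs_ser (\<lambda>w. if w = v then 1 else 0)"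
abbreviation vr :: "'a \<Rightarrow> 'a ser" where "vr x \<equiv> mon [x]"
definition brk :: "'a ser \<Rightarrow> 'a ser \<Rightarrow> 'a ser" where
  "brk X Y = X * Y - Y * X"
definition supp :: "'a ser \<Rightarrow> 'a list set" where
  "supp X = {w. cf X w \<noteq> 0}"
definition fs :: "'a ser \<Rightarrow> bool" where
  "fs X \<longleftrightarrow> finite (supp X)"
definition lin :: "('a list \<Rightarrow> 'a ser) \<Rightarrow> 'a ser \<Rightarrow> 'a ser" where
  "lin F X = (\<Sum>u\<in>supp X. sm (cf X u) (F u))"
definition NN :: "'a ser \<Rightarrow> 'a ser" where
  "NN X = Abs_ser (\<lambda>w. of_nat (length w) * cf X w)"

lemma cf_sm [simp]: "cf (sm c X) w = c * cf X w" by (simp add: sm_def)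
lemma cf_mon: "cf (mon v) w = (if w = v then 1 else 0)" by (simp add: mon_def)
lemma cf_NN [simp]: "cf (NN X) w = of_nat (length w) * cf X w" by (simp add: NN_def)
lemma cf_sum: "cf (sum f S) w = (\<Sum>s\<in>S. cf (f s) w)"
  by (induction S rule: infinite_finite_induct) auto

lemma sm_add: "sm c (X + Y) = sm c X + sm c Y" by (rule ser_eqI) (simp add: algebra_simps)
lemma sm_diff: "sm c (X - Y) = sm c X - sm c Y" by (rule ser_eqI) (simp add: algebra_simps)
lemma sm_zero [simp]: "sm c 0 = 0" by (rule ser_eqI) simp
lemma sm_zero2 [simp]: "sm 0 X = 0" by (rule ser_eqI) simp
lemma sm_one [simp]: "sm 1 X = X" by (rule ser_eqI) simp
lemma sm_sm [simp]: "sm c (sm d X) = sm (c * d) X" by (rule ser_eqI) simp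
lemma sm_sum: "sm c (sum f S) = (\<Sum>s\<in>S. sm c (f s))"
  by (induction S rule: infinite_finite_induct) (auto simp: sm_add)
lemma sm_mult_left: "sm c X * Y = sm c (X * Y)"
  by (rule ser_eqI) (simp add: cf_times sum_distrib_left case_prod_unfold mult.assoc)
lemma sm_mult_right: "X * sm c Y = sm c (X * Y)"
  by (rule ser_eqI) (simp add: cf_times sum_distrib_left case_prod_unfold mult.left_commute)

lemma mon_mult: "mon u * mon v = mon (u @ v)"
proof (rule ser_eqI)
  fix w
  have "cf (mon u * mon v) w = (\<Sum>p\<in>splits w. if p = (u, v) then 1 else 0)"
    unfolding cf_times by (rule sum.cong) (auto simp: cf_mon split: if_splits)
  then show "cf (mon u * mon v) w = cf (mon (u @ v)) w"
    by (simp add: sum.delta cf_mon, auto simp: splits_def)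
qed

lemma fs_zero [simp]: "fs 0" by (simp add: fs_def supp_def)
lemma fs_add [simp]: "fs X \<Longrightarrow> fs Y \<Longrightarrow> fs (X + Y)"
  unfolding fs_def supp_def by (rule finite_subset[of _ "{w. cf X w \<noteq> 0} \<union> {w. cf Y w \<noteq> 0}"]) auto
lemma fs_diff [simp]: "fs X \<Longrightarrow> fs Y \<Longrightarrow> fs (X - Y)"
  unfolding fs_def supp_def by (rule finite_subset[of _ "{w. cf X w \<noteq> 0} \<union> {w. cf Y w \<noteq> 0}"]) auto
lemma fs_sm [simp]: "fs X \<Longrightarrow> fs (sm c X)"
  unfolding fs_def supp_def by (rule finite_subset[of _ "{w. cf X w \<noteq> 0}"]) auto
lemma fs_mon [simp]: "fs (mon v)"
  unfolding fs_def supp_def by (rule finite_subset[of _ "{v}"]) (auto simp: cf_mon)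
lemma fs_sum [simp]: "(\<And>i. i \<in> I \<Longrightarrow> fs (f i)) \<Longrightarrow> fs (sum f I)"
  by (induction I rule: infinite_finite_induct) auto

lemma decomp_superset:
  assumes "finite S" "supp X \<subseteq> S"
  shows "X = (\<Sum>u\<in>S. sm (cf X u) (mon u))"
proof (rule ser_eqI)
  fix w
  have "cf (\<Sum>u\<in>S. sm (cf X u) (mon u)) w = (\<Sum>u\<in>S. if u = w then cf X w else 0)"
    unfolding cf_sum by (rule sum.cong) (auto simp: cf_mon)
  also have "\<dots> = cf X w" using assms by (auto simp: sum.delta' supp_def)
  finally show "cf X w = cf (\<Sum>u\<in>S. sm (cf X u) (mon u)) w" by simp
qed

lemma decomp: "fs X \<Longrightarrow> X = (\<Sum>u\<in>supp X. sm (cf X u) (mon u))"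
  by (rule decomp_superset) (auto simp: fs_def)

lemma fs_mult [simp]: assumes "fs X" "fs Y" shows "fs (X * Y)"
proof -
  have "X * Y = (\<Sum>u\<in>supp X. sm (cf X u) (mon u)) * (\<Sum>v\<in>supp Y. sm (cf Y v) (mon v))"
    using assms decomp by metis
  also have "\<dots> = (\<Sum>u\<in>supp X. \<Sum>v\<in>supp Y. sm (cf X u * cf Y v) (mon (u @ v)))"
    by (simp add: sum_distrib_left sum_distrib_right sm_mult_left sm_mult_right mon_mult sm_sum)
       (subst sum.swap, simp add: mult.commute)
  finally show ?thesis by simp
qed

lemma lin_superset:
  assumes "finite S" "supp X \<subseteq> S"
  shows "lin F X = (\<Sum>u\<in>S. sm (cf X u) (F u))"
  unfolding lin_def using assms
  by (intro sum.mono_neutral_left) (auto simp: supp_def)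

lemma lin_add: assumes "fs X" "fs Y" shows "lin F (X + Y) = lin F X + lin F Y"
proof -
  let ?S = "supp X \<union> supp Y"
  have f: "finite ?S" using assms by (simp add: fs_def)
  have "lin F (X + Y) = (\<Sum>u\<in>?S. sm (cf (X+Y) u) (F u))"
    by (rule lin_superset[OF f]) (auto simp: supp_def)
  also have "\<dots> = (\<Sum>u\<in>?S. sm (cf X u) (F u)) + (\<Sum>u\<in>?S. sm (cf Y u) (F u))"
    by (simp add: sum.distrib[symmetric]) (rule sum.cong, auto intro!: ser_eqI simp: algebra_simps)
  also have "\<dots> = lin F X + lin F Y"
    using lin_superset[OF f, of X F] lin_superset[OF f, of Y F] by auto
  finally show ?thesis .
qed

lemma lin_sm: "fs X \<Longrightarrow> lin F (sm c X) = sm c (lin F X)"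
  unfolding sm_sum lin_def[of F X] 
  by (subst lin_superset[of "supp X"]) (auto simp: fs_def supp_def intro!: sum.cong)

lemma lin_zero [simp]: "lin F 0 = 0" by (simp add: lin_def supp_def)

lemma lin_diff: assumes "fs X" "fs Y" shows "lin F (X - Y) = lin F X - lin F Y"
proof -
  have "X - Y = X + sm (-1) Y" by (rule ser_eqI) simp
  moreover have "sm (-1) Z = - Z" for Z :: "'a ser" by (rule ser_eqI) simp
  ultimately show ?thesis using assms by (metis fs_sm lin_add lin_sm diff_conv_add_uminus)
qed

lemma lin_sum: "finite I \<Longrightarrow> (\<And>i. i \<in> I \<Longrightarrow> fs (f i)) \<Longrightarrow> lin F (sum f I) = (\<Sum>i\<in>I. lin F (f i))"
  by (induction I rule: finite_induct) (auto simp: lin_add)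

lemma supp_mon: "supp (mon v) = {v}" by (auto simp: supp_def cf_mon)

lemma lin_mon [simp]: "lin F (mon v) = F v"
  by (simp add: lin_def supp_mon cf_mon)

lemma lin_mult:
  assumes "fs X" "fs Y"
  shows "lin F (X * Y) = (\<Sum>u\<in>supp X. \<Sum>v\<in>supp Y. sm (cf X u * cf Y v) (F (u @ v)))"
proof -
  have fX: "finite (supp X)" and fY: "finite (supp Y)" using assms by (auto simp: fs_def)
  have "X * Y = (\<Sum>u\<in>supp X. sm (cf X u) (mon u)) * (\<Sum>v\<in>supp Y. sm (cf Y v) (mon v))"
    using assms decomp by metis
  also have "\<dots> = (\<Sum>u\<in>supp X. \<Sum>v\<in>supp Y. sm (cf X u * cf Y v) (mon (u @ v)))"
    by (simp add: sum_distrib_left sum_distrib_right sm_mult_left sm_mult_right mon_mult sm_sum)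
       (subst sum.swap, simp add: mult.commute)
  finally have "lin F (X * Y) = lin F (\<Sum>u\<in>supp X. \<Sum>v\<in>supp Y. sm (cf X u * cf Y v) (mon (u @ v)))"
    by simp
  also have "\<dots> = (\<Sum>u\<in>supp X. \<Sum>v\<in>supp Y. sm (cf X u * cf Y v) (F (u @ v)))"
    using fX fY by (simp add: lin_sum lin_sm)
  finally show ?thesis .
qed


lemma cf_times_fun: "cf (X * Y) = ncmult (cf X) (cf Y)"
  by (rule ext) (simp add: cf_times ncmult_splits)

lemma abs_add: "Abs_ser (ncadd P Q) = Abs_ser P + Abs_ser Q"
  by (rule ser_eqI) (simp add: ncadd_def)
lemma abs_sm: "Abs_ser (ncsmult c P) = sm c (Abs_ser P)"
  by (rule ser_eqI) (simp add: ncsmult_def)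
lemma abs_var: "Abs_ser (ncvar x) = vr x"
  by (rule ser_eqI) (simp add: ncvar_def cf_mon)
lemma abs_zero: "Abs_ser (\<lambda>w. 0) = 0"
  by (rule ser_eqI) simp
lemma abs_comm: "Abs_ser (nccomm P Q) = brk (Abs_ser P) (Abs_ser Q)"
  by (rule ser_eqI) (simp add: nccomm_def brk_def cf_times ncmult_splits)

lemma LS_induct[consumes 1, case_names zero var add smult comm]:
  assumes "cf X \<in> lie_polys"
    and "Pr 0" "\<And>x. Pr (vr x)"
    and "\<And>X Y. cf X \<in> lie_polys \<Longrightarrow> cf Y \<in> lie_polys \<Longrightarrow> Pr X \<Longrightarrow> Pr Y \<Longrightarrow> Pr (X + Y)"
    and "\<And>X c. cf X \<in> lie_polys \<Longrightarrow> Pr X \<Longrightarrow> Pr (sm c X)"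
    and "\<And>X Y. cf X \<in> lie_polys \<Longrightarrow> cf Y \<in> lie_polys \<Longrightarrow> Pr X \<Longrightarrow> Pr Y \<Longrightarrow> Pr (brk X Y)"
  shows "Pr X"
proof -
  have "Q \<in> lie_polys \<Longrightarrow> Pr (Abs_ser Q)" for Q
  proof (induction rule: lie_polys.induct)
    case zero then show ?case using assms(2) by (simp add: abs_zero)
  next
    case (var x) then show ?case using assms(3) by (simp add: abs_var)
  next
    case (add P Q) then show ?case using assms(4)[of "Abs_ser P" "Abs_ser Q"] by (simp add: abs_add)
  next
    case (smult P c) then show ?case using assms(5)[of "Abs_ser P" c] by (simp add: abs_sm)
  next
    case (comm P Q) then show ?case using assms(6)[of "Abs_ser P" "Abs_ser Q"] by (simp add: abs_comm)
  qed
  from this[OF assms(1)] show ?thesis by (simp add: cf_inverse)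
qed

lemma LS_zero: "cf 0 \<in> lie_polys"
  using lie_polys.zero abs_zero by (metis cf_Abs)
lemma LS_var: "cf (vr x) \<in> lie_polys"
  using lie_polys.var abs_var by (metis cf_Abs)
lemma LS_add: "cf X \<in> lie_polys \<Longrightarrow> cf Y \<in> lie_polys \<Longrightarrow> cf (X + Y) \<in> lie_polys"
  using lie_polys.add abs_add by (metis cf_Abs cf_inverse)
lemma LS_sm: "cf X \<in> lie_polys \<Longrightarrow> cf (sm c X) \<in> lie_polys"
  using lie_polys.smult abs_sm by (metis cf_Abs cf_inverse)
lemma LS_brk: "cf X \<in> lie_polys \<Longrightarrow> cf Y \<in> lie_polys \<Longrightarrow> cf (brk X Y) \<in> lie_polys"
  using lie_polys.comm abs_comm by (metis cf_Abs cf_inverse)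
lemma LS_sum: "finite I \<Longrightarrow> (\<And>i. i \<in> I \<Longrightarrow> cf (f i) \<in> lie_polys) \<Longrightarrow> cf (sum f I) \<in> lie_polys"
  by (induction I rule: finite_induct) (auto simp: LS_zero LS_add)

lemma splits_Nil [simp]: "splits [] = {([],[])}" by (auto simp: splits_def)
lemma cf_times_Nil: "cf (X * Y) [] = cf X [] * cf Y []" by (simp add: cf_times)

lemma fs_brk [simp]: "fs X \<Longrightarrow> fs Y \<Longrightarrow> fs (brk X Y)" by (simp add: brk_def)

lemma LS_basic: "cf X \<in> lie_polys \<Longrightarrow> fs X \<and> cf X [] = 0"
  by (induction rule: LS_induct) (auto simp: brk_def cf_times_Nil cf_mon)

fun tw :: "'a list \<Rightarrow> 'a ser \<Rightarrow> 'a ser" where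
  "tw [] Z = Z"
| "tw (x # u) Z = brk (vr x) (tw u Z)"

lemma tw_add: "tw u (Z1 + Z2) = tw u Z1 + tw u Z2"
  by (induction u) (auto simp: brk_def algebra_simps)
lemma tw_zero [simp]: "tw u 0 = 0"
  by (induction u) (auto simp: brk_def)
lemma tw_sm: "tw u (sm c Z) = sm c (tw u Z)"
  by (induction u) (auto simp: brk_def sm_mult_left sm_mult_right sm_diff)
lemma tw_sum: "tw u (sum f I) = (\<Sum>i\<in>I. tw u (f i))"
  by (induction I rule: infinite_finite_induct) (auto simp: tw_add)
lemma tw_append: "tw (u @ v) Z = tw u (tw v Z)"
  by (induction u) auto

definition tau :: "'a ser \<Rightarrow> 'a ser \<Rightarrow> 'a ser" where
  "tau X Z = lin (\<lambda>u. tw u Z) X"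

lemma tau_mult:
  assumes "fs X" "fs Y"
  shows "tau (X * Y) Z = tau X (tau Y Z)"
proof -
  have "tau (X * Y) Z = (\<Sum>u\<in>supp X. \<Sum>v\<in>supp Y. sm (cf X u * cf Y v) (tw (u @ v) Z))"
    unfolding tau_def by (rule lin_mult[OF assms])
  also have "\<dots> = tau X (tau Y Z)"
    unfolding tau_def lin_def[of _ X] lin_def[of _ Y]
    by (simp add: tw_sum tw_sm sm_sum tw_append)
  finally show ?thesis .
qed

lemma tau_vr: "tau (vr x) Z = brk (vr x) Z"
  by (simp add: tau_def)

fun rw :: "'a list \<Rightarrow> 'a ser" where
  "rw [] = 0"
| "rw [x] = vr x"
| "rw (x # y # u) = brk (vr x) (rw (y # u))"

lemma rw_append: "v \<noteq> [] \<Longrightarrow> rw (u @ v) = tw u (rw v)"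
proof (induction u)
  case Nil then show ?case by simp
next
  case (Cons x u)
  then show ?case by (cases "u @ v") auto
qed

definition RR :: "'a ser \<Rightarrow> 'a ser" where "RR X = lin rw X"

lemma RR_mult:
  assumes "fs X" "fs Y" "cf Y [] = 0"
  shows "RR (X * Y) = tau X (RR Y)"
proof -
  have "RR (X * Y) = (\<Sum>u\<in>supp X. \<Sum>v\<in>supp Y. sm (cf X u * cf Y v) (rw (u @ v)))"
    unfolding RR_def by (rule lin_mult[OF assms(1,2)])
  also have "\<dots> = (\<Sum>u\<in>supp X. \<Sum>v\<in>supp Y. sm (cf X u * cf Y v) (tw u (rw v)))"
    using assms(3) by (intro sum.cong refl) (metis (mono_tags) mem_Collect_eq rw_append supp_def)
  also have "\<dots> = tau X (RR Y)"
    unfolding tau_def RR_def lin_def[of _ X] lin_def[of _ Y]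
    by (simp add: tw_sum tw_sm sm_sum)
  finally show ?thesis .
qed

lemma NN_add: "NN (X + Y) = NN X + NN Y" by (rule ser_eqI) (simp add: algebra_simps)
lemma NN_diff: "NN (X - Y) = NN X - NN Y" by (rule ser_eqI) (simp add: algebra_simps)
lemma NN_sm: "NN (sm c X) = sm c (NN X)" by (rule ser_eqI) (simp add: algebra_simps)
lemma NN_vr: "NN (vr x) = vr x" by (rule ser_eqI) (simp add: cf_mon)
lemma NN_mult: "NN (X * Y) = NN X * Y + X * NN Y"
proof (rule ser_eqI)
  fix w
  have "cf (NN (X * Y)) w = (\<Sum>(u,v)\<in>splits w. of_nat (length w) * (cf X u * cf Y v))"
    by (simp add: cf_times sum_distrib_left case_prod_unfold)
  also have "\<dots> = (\<Sum>(u,v)\<in>splits w. (of_nat (length u) * cf X u) * cf Y v + cf X u * (of_nat (length v) * cf Y v))"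
    by (intro sum.cong refl) (auto simp: splits_def algebra_simps)
  also have "\<dots> = cf (NN X * Y + X * NN Y) w"
    by (simp add: cf_times sum.distrib case_prod_unfold)
  finally show "cf (NN (X * Y)) w = cf (NN X * Y + X * NN Y) w" .
qed

lemma LS_tau: "cf X \<in> lie_polys \<Longrightarrow> tau X Z = brk X Z"
proof (induction arbitrary: Z rule: LS_induct)
  case zero then show ?case by (simp add: tau_def brk_def)
next
  case (var x) then show ?case by (simp add: tau_vr)
next
  case (add X Y) then show ?case
    using LS_basic[of X] LS_basic[of Y] by (simp add: tau_def lin_add brk_def algebra_simps)
next
  case (smult X c) then show ?case
    using LS_basic[of X] by (simp add: tau_def lin_sm brk_def sm_mult_left sm_mult_right sm_diff)
next
  case (comm X Y)
  have fX: "fs X" and fY: "fs Y" using comm LS_basic by auto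
  have "tau (brk X Y) Z = tau (X * Y) Z - tau (Y * X) Z"
    using fX fY by (simp add: brk_def tau_def lin_diff)
  also have "\<dots> = tau X (tau Y Z) - tau Y (tau X Z)" using fX fY by (simp add: tau_mult)
  also have "\<dots> = brk X (brk Y Z) - brk Y (brk X Z)" using comm by simp
  also have "\<dots> = brk (brk X Y) Z" by (simp add: brk_def algebra_simps)
  finally show ?case .
qed

lemma LS_RR: "cf X \<in> lie_polys \<Longrightarrow> RR X = NN X"
proof (induction rule: LS_induct)
  case zero then show ?case by (simp add: RR_def) (rule ser_eqI, simp)
next
  case (var x) then show ?case by (simp add: RR_def NN_vr)
next
  case (add X Y) then show ?case
    using LS_basic[of X] LS_basic[of Y] by (simp add: RR_def lin_add NN_add)
next
  case (smult X c) then show ?case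
    using LS_basic[of X] by (simp add: RR_def lin_sm NN_sm)
next
  case (comm X Y)
  have X: "fs X" "cf X [] = 0" and Y: "fs Y" "cf Y [] = 0" using comm LS_basic by auto
  have "RR (brk X Y) = RR (X * Y) - RR (Y * X)"
    using X Y by (simp add: brk_def RR_def lin_diff)
  also have "\<dots> = tau X (RR Y) - tau Y (RR X)" using X Y by (simp add: RR_mult)
  also have "\<dots> = brk X (NN Y) - brk Y (NN X)" using comm by (simp add: LS_tau)
  also have "\<dots> = NN (brk X Y)" by (simp add: brk_def NN_diff NN_mult algebra_simps)
  finally show ?case .
qed


lemma cf_vr_left: "cf (vr x * Z) w = (if w \<noteq> [] \<and> hd w = x then cf Z (tl w) else 0)"
proof -
  have "cf (vr x * Z) w = (\<Sum>p\<in>splits w. if p = ([x], tl w) then cf Z (tl w) else 0)"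
    unfolding cf_times by (intro sum.cong refl) (auto simp: cf_mon splits_def split: if_splits)
  also have "\<dots> = (if w \<noteq> [] \<and> hd w = x then cf Z (tl w) else 0)"
    by (simp add: sum.delta) (cases w, auto simp: splits_def)
  finally show ?thesis .
qed

lemma cf_vr_right: "cf (Z * vr x) w = (if w \<noteq> [] \<and> last w = x then cf Z (butlast w) else 0)"
proof -
  have "cf (Z * vr x) w = (\<Sum>p\<in>splits w. if p = (butlast w, [x]) then cf Z (butlast w) else 0)"
    unfolding cf_times by (intro sum.cong refl) (auto simp: cf_mon splits_def split: if_splits)
  also have "\<dots> = (if w \<noteq> [] \<and> last w = x then cf Z (butlast w) else 0)"
    by (simp add: sum.delta) (cases w rule: rev_cases, auto simp: splits_def)
  finally show ?thesis .
qed

lemma kernel: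
  assumes comm: "vr a * Z = Z * vr a" and rep: "\<And>k. cf Z (replicate k a) = 0"
  shows "Z = 0"
proof -
  have key: "\<And>x. cf Z x = (if last (a # x) = a then cf Z (butlast (a # x)) else 0)"
  proof -
    fix x
    have "cf (vr a * Z) (a # x) = cf (Z * vr a) (a # x)" using comm by simp
    then show "cf Z x = (if last (a # x) = a then cf Z (butlast (a # x)) else 0)"
      by (simp add: cf_vr_left cf_vr_right)
  qed
  have "\<exists>y\<in>set v. y \<noteq> a \<Longrightarrow> \<forall>p. cf Z (p @ v) = 0" for v
  proof (induction v rule: rev_induct)
    case Nil then show ?case by simp
  next
    case (snoc x v)
    show ?case
    proof
      fix p
      show "cf Z (p @ v @ [x]) = 0"
      proof (cases "x = a")
        case False
        then show ?thesis using key[of "p @ v @ [x]"] by simp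
      next
        case True
        then have "\<exists>y\<in>set v. y \<noteq> a" using snoc.prems by auto
        then have "cf Z ((a # p) @ v) = 0" using snoc.IH by blast
        then show ?thesis using key[of "p @ v @ [x]"] True by (simp add: butlast_append)
      qed
    qed
  qed
  then have nz: "\<exists>y\<in>set v. y \<noteq> a \<Longrightarrow> cf Z v = 0" for v
    by (metis append.left_neutral)
  show ?thesis
  proof (rule ser_eqI)
    fix w
    show "cf Z w = cf 0 w"
    proof (cases "\<exists>y\<in>set w. y \<noteq> a")
      case True then show ?thesis using nz by simp
    next
      case False
      then have "w = replicate (length w) a" by (simp add: replicate_length_same)
      then show ?thesis using rep by (metis cf_zero)
    qed
  qed
qed

definition ms :: "'a ser \<Rightarrow> 'a multiset \<Rightarrow> bool" where
  "ms X m \<longleftrightarrow> (\<forall>w. cf X w \<noteq> 0 \<longrightarrow> mset w = m)"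

lemma ms_zero [simp]: "ms 0 m" by (simp add: ms_def)
lemma ms_mon: "ms (mon v) (mset v)" by (simp add: ms_def cf_mon)
lemma ms_diff: "ms X m \<Longrightarrow> ms Y m \<Longrightarrow> ms (X - Y) m"
  by (auto simp: ms_def) (metis diff_self)
lemma ms_times: assumes "ms X m1" "ms Y m2" shows "ms (X * Y) (m1 + m2)"
  unfolding ms_def
proof (intro allI impI)
  fix w assume "cf (X * Y) w \<noteq> 0"
  then obtain p where "p \<in> splits w" "cf X (fst p) * cf Y (snd p) \<noteq> 0"
    unfolding cf_times by (metis (mono_tags, lifting) case_prod_unfold sum.not_neutral_contains_not_neutral)
  then show "mset w = m1 + m2" using assms by (auto simp: ms_def splits_def)
qed
lemma ms_brk: "ms X m1 \<Longrightarrow> ms Y m2 \<Longrightarrow> ms (brk X Y) (m1 + m2)"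
  unfolding brk_def by (metis ms_diff ms_times add.commute)

lemma ms_vr: "ms (vr x) {#x#}" using ms_mon[of "[x]"] by simp
lemma ms_brk_vr: "ms Y m \<Longrightarrow> ms (brk (vr x) Y) (add_mset x m)"
  using ms_brk[OF ms_vr, of Y m x] by simp

lemma ms_rw: "ms (rw v) (mset v)"
  by (induction v rule: rw.induct) (auto simp: ms_vr ms_brk_vr)

lemma ms_tw: "ms Z m \<Longrightarrow> ms (tw u Z) (mset u + m)"
  by (induction u) (auto simp: ms_brk_vr)

lemma mset_rep: "mset v = mset (replicate k a) \<Longrightarrow> v = replicate k a"
  by (metis in_multiset_in_set in_set_replicate replicate_length_same size_mset length_replicate set_mset_mset)

lemma cf_lin: "cf (lin F X) w = (\<Sum>u\<in>supp X. cf X u * cf (F u) w)"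
  by (simp add: lin_def cf_sum)

lemma LS_rw: "cf (rw v) \<in> lie_polys"
  by (induction v rule: rw.induct) (auto simp: LS_var LS_brk lie_polys.zero)

lemma tau_zero: "tau X 0 = 0" by (simp add: tau_def lin_def)


lemma cf_lin_rep:
  assumes "\<And>u. cf X u \<noteq> 0 \<Longrightarrow> ms (F u) (mset u)" "cf X (replicate k a) = 0"
  shows "cf (lin F X) (replicate k a) = 0"
  unfolding cf_lin
proof (rule sum.neutral, intro ballI)
  fix u assume "u \<in> supp X"
  then have "cf X u \<noteq> 0" by (simp add: supp_def)
  show "cf X u * cf (F u) (replicate k a) = 0"
  proof (rule ccontr)
    assume "cf X u * cf (F u) (replicate k a) \<noteq> 0"
    then have "mset (replicate k a) = mset u" using assms(1)[OF \<open>cf X u \<noteq> 0\<close>] by (auto simp: ms_def)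
    then have "u = replicate k a" using mset_rep by metis
    then show False using assms(2) \<open>cf X u \<noteq> 0\<close> by simp
  qed
qed

lemma butlast_rep: "butlast (replicate k x) = replicate (k - 1) x"
  by (induction k) (auto simp: butlast.simps split: if_splits, metis Suc_pred replicate_Suc)

theorem lemma3:
  fixes a :: "'a::finite" and P :: "'a ncpoly"
  assumes "card (UNIV :: 'a set) \<ge> 2"
    and "ncpoly P"
    and "\<forall>k. P (replicate k a) = 0"
    and "nccomm (ncvar a) P \<in> lie_polys"
  shows "P \<in> lie_polys"
proof -
  define X where "X = Abs_ser P"
  define A where "A = (vr a :: 'a ser)"
  have cfX: "cf X = P" by (simp add: X_def)
  have fX: "fs X" using assms(2) by (simp add: fs_def supp_def cfX ncpoly_def)
  have rep: "cf X (replicate k a) = 0" for k using assms(3) cfX by simp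
  have X0: "cf X [] = 0" using rep[of 0] by simp
  define L where "L = brk A X"
  have LL: "cf L \<in> lie_polys"
    using assms(4) by (simp add: L_def A_def X_def abs_comm[symmetric] abs_var[symmetric])
  have fA: "fs A" "cf A [] = 0" by (auto simp: A_def cf_mon)
  have RA: "RR (vr a) = (vr a :: 'a ser)" by (simp add: RR_def)
  have RL: "RR L = brk A (RR X) - tau X A"
  proof -
    have "RR L = RR (A * X) - RR (X * A)" using fX fA by (simp add: L_def brk_def RR_def lin_diff)
    also have "\<dots> = tau A (RR X) - tau X (RR A)" using fX fA X0 by (simp add: RR_mult)
    finally show ?thesis by (simp add: A_def RA tau_vr)
  qed
  have NL: "NN L = A * X + A * NN X - NN X * A - X * A"
    by (simp add: L_def brk_def NN_diff NN_mult A_def NN_vr)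
  have e1: "brk A (RR X) - tau X A = A * X + A * NN X - NN X * A - X * A"
    using LS_RR[OF LL] RL NL by simp
  have tL: "tau L A = brk L A" using LS_tau[OF LL] .
  have "tau L A = tau (A * X) A - tau (X * A) A" using fX fA by (simp add: L_def brk_def tau_def lin_diff)
  also have "\<dots> = brk A (tau X A)" using fX fA
    by (simp add: tau_mult A_def tau_vr brk_def tau_zero)
  finally have e2: "brk A (tau X A) = brk L A" using tL by simp
  define T where "T = tau X A - (X * A - A * X)"
  have "A * T = T * A" using e2 by (simp add: T_def L_def brk_def algebra_simps)
  moreover have "cf T (replicate k a) = 0" for k
  proof -
    have "cf (tau X A) (replicate k a) = 0"
    proof -
      have "cf (tau X A) (replicate k a) = (\<Sum>u\<in>supp X. cf X u * cf (tw u A) (replicate k a))"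
        by (simp add: tau_def cf_lin)
      also have "\<dots> = 0"
      proof (rule sum.neutral, intro ballI)
        fix u assume "u \<in> supp X"
        then have nz: "cf X u \<noteq> 0" by (simp add: supp_def)
        show "cf X u * cf (tw u A) (replicate k a) = 0"
        proof (rule ccontr)
          assume "cf X u * cf (tw u A) (replicate k a) \<noteq> 0"
          moreover have "ms (tw u A) (mset (u @ [a]))" using ms_tw[OF ms_vr[of a], of u] by (simp add: A_def)
          ultimately have "mset (replicate k a) = mset (u @ [a])" by (auto simp: ms_def)
          then have "u @ [a] = replicate k a" using mset_rep by metis
          then have "u = replicate (k - 1) a"
            by (metis butlast_rep butlast_snoc)
          then show False using nz rep by simp
        qed
      qed
      finally show ?thesis .
    qed
    moreover have "cf (X * A) (replicate k a) = 0"
      by (simp add: A_def cf_vr_right butlast_rep rep)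
    moreover have "cf (A * X) (replicate k a) = 0"
      by (simp add: A_def cf_vr_left tl_replicate rep)
    ultimately show ?thesis by (simp add: T_def)
  qed
  ultimately have "T = 0" using kernel[of a T] by (simp add: A_def)
  then have tXA: "tau X A = X * A - A * X" by (simp add: T_def)
  define D where "D = RR X - NN X"
  have "A * D = D * A" using e1 tXA by (simp add: D_def brk_def algebra_simps)
  moreover have "cf D (replicate k a) = 0" for k
  proof -
    have "cf (RR X) (replicate k a) = 0"
      unfolding RR_def by (rule cf_lin_rep[OF ms_rw rep])
    then show ?thesis by (simp add: D_def rep)
  qed
  ultimately have "D = 0" using kernel[of a D] by (simp add: A_def)
  then have RX: "RR X = NN X" by (simp add: D_def)
  define Y where "Y = (\<Sum>v\<in>supp X. sm (cf X v / of_nat (length v)) (rw v))"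
  have LY: "cf Y \<in> lie_polys" unfolding Y_def using fX
    by (intro LS_sum) (auto simp: fs_def LS_sm LS_rw)
  have "Y = X"
  proof (rule ser_eqI)
    fix w
    have "cf Y w = (\<Sum>v\<in>supp X. cf X v * cf (rw v) w / of_nat (length w))"
      unfolding Y_def cf_sum cf_sm
    proof (intro sum.cong refl)
      fix v
      show "cf X v / of_nat (length v) * cf (rw v) w = cf X v * cf (rw v) w / of_nat (length w)"
      proof (cases "cf (rw v) w = 0")
        case False
        then have "mset w = mset v" using ms_rw[of v] by (auto simp: ms_def)
        then have "length w = length v" by (metis size_mset)
        then show ?thesis by simp
      qed simp
    qed
    also have "\<dots> = cf (RR X) w / of_nat (length w)"
      by (simp add: RR_def cf_lin sum_divide_distrib)
    also have "\<dots> = cf X w" using RX X0 by (cases w) auto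
    finally show "cf Y w = cf X w" .
  qed
  then show ?thesis using LY cfX by simp
qed

end
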